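(* Let $\delta$ be a root of the quadratic polynomial $\mathsf{u}(\mathsf{z}+1)^2-(\mathsf{v}-1)(\mathsf{z}+1)-1$ in an algebraic closure of $\mathbb{K}=\mathbb{C}(\mathsf{u},\mathsf{v})$, and let $\mathbb{L}=\mathbb{K}(\delta)$. Put $\mathsf{q}:=\mathsf{u}(\delta+1)^2\in\mathbb{L}$. Then the assignment $R_i\mapsto T_i:=R_i+\delta E_iR_i$, $E_i\mapsto E_i$ ($1\le i\le n-1$) induces an isomorphism of $\mathbb{L}$-algebras between $\mathcal{E}_n(\mathsf{u},\mathsf{v})\otimes_{\mathbb{K}}\mathbb{L}$ and the one-parameter bt-algebra $\mathcal{E}_n(\mathsf{q})$ over $\mathbb{L}$; that is, the elements $T_i$ and $E_i$ satisfy all the defining relations of $\mathcal{E}_n(\mathsf{q})$, in particular $T_i^2=1+(\mathsf{q}-1)E_i+(\mathsf{q}-1)E_iT_i$, and they generate.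
   Context: Let $\mathsf{u},\mathsf{v}$ be commuting indeterminates and $\mathbb{K}=\mathbb{C}(\mathsf{u},\mathsf{v})$. The two-parameter bt-algebra $\mathcal{E}_n(\mathsf{u},\mathsf{v})$ is $\mathbb{K}$ for $n=1$, and for $n\ge 2$ the unital associative $\mathbb{K}$-algebra generated by $R_1,\dots,R_{n-1},E_1,\dots,E_{n-1}$ subject to: $E_iE_j=E_jE_i$ for all $i,j$; $E_i^2=E_i$; $E_iR_j=R_jE_i$ for $|i-j|>1$; $E_iR_i=R_iE_i$; $E_iR_jR_i=R_jR_iE_j$ for $|i-j|=1$; $E_iE_jR_i=E_jR_iE_j=R_iE_iE_j$ for $|i-j|=1$; $R_iR_j=R_jR_i$ for $|i-j|>1$; $R_iR_jR_i=R_jR_iR_j$ for $|i-j|=1$; and $R_i^2=1+(\mathsf{u}-1)E_i+(\mathsf{v}-1)E_iR_i$ for all $i$. For a field $F$ and $\mathsf{q}\in F$ (or an indeterminate), the one-parameter bt-algebra $\mathcal{E}_n(\mathsf{q})$ over $F$ is the unital $F$-algebra generated by $T_1,\dots,T_{n-1},E_1,\dots,E_{n-1}$ subject to the same relations with $R_i$ replaced by $T_i$, except that the quadratic relation is $T_i^2=1+(\mathsf{q}-1)E_i+(\mathsf{q}-1)E_iT_i$. *)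

theory Defs
  imports "HOL-Computational_Algebra.Polynomial" "HOL-Computational_Algebra.Fraction_Field"
begin

text \<open>K = Frac(C[x][y]); u is the inner variable x, v the outer variable y.\<close>
type_synonym K = "complex poly poly fract"

definition uu :: K where "uu = Fract [:[:0, 1:]:] 1"
definition vv :: K where "vv = Fract [:0, 1:] 1"

text \<open>Letters: G i stands for the generator R_i (resp. T_i), E i for E_i.\<close>
datatype gen = G nat | E nat

definition letters :: "nat \<Rightarrow> gen set" where
  "letters n = {G i | i. 1 \<le> i \<and> i < n} \<union> {E i | i. 1 \<le> i \<and> i < n}"

definition fa_carrier :: "nat \<Rightarrow> (gen list \<Rightarrow> 'l::field) set" where
  "fa_carrier n = {f. finite {w. f w \<noteq> 0} \<and> (\<forall>w. f w \<noteq> 0 \<longrightarrow> set w \<subseteq> letters n)}"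

definition fa_zero :: "gen list \<Rightarrow> 'l::field" where
  "fa_zero = (\<lambda>w. 0)"

definition mono :: "gen list \<Rightarrow> gen list \<Rightarrow> 'l::field" where
  "mono u = (\<lambda>w. if w = u then 1 else 0)"

definition fa_add :: "(gen list \<Rightarrow> 'l::field) \<Rightarrow> (gen list \<Rightarrow> 'l) \<Rightarrow> gen list \<Rightarrow> 'l" where
  "fa_add f g = (\<lambda>w. f w + g w)"

definition fa_diff :: "(gen list \<Rightarrow> 'l::field) \<Rightarrow> (gen list \<Rightarrow> 'l) \<Rightarrow> gen list \<Rightarrow> 'l" where
  "fa_diff f g = (\<lambda>w. f w - g w)"

definition fa_smul :: "'l::field \<Rightarrow> (gen list \<Rightarrow> 'l) \<Rightarrow> gen list \<Rightarrow> 'l" where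
  "fa_smul c f = (\<lambda>w. c * f w)"

definition fa_mult :: "(gen list \<Rightarrow> 'l::field) \<Rightarrow> (gen list \<Rightarrow> 'l) \<Rightarrow> gen list \<Rightarrow> 'l" where
  "fa_mult f g = (\<lambda>w. \<Sum>k\<in>{0..length w}. f (take k w) * g (drop k w))"

inductive_set fa_ideal :: "nat \<Rightarrow> (gen list \<Rightarrow> 'l::field) set \<Rightarrow> (gen list \<Rightarrow> 'l) set"
  for n :: nat and S :: "(gen list \<Rightarrow> 'l) set" where
  zero: "fa_zero \<in> fa_ideal n S"
| gen: "r \<in> S \<Longrightarrow> r \<in> fa_ideal n S"
| add: "a \<in> fa_ideal n S \<Longrightarrow> b \<in> fa_ideal n S \<Longrightarrow> fa_add a b \<in> fa_ideal n S"
| mult: "a \<in> fa_ideal n S \<Longrightarrow> x \<in> fa_carrier n \<Longrightarrow> y \<in> fa_carrier n \<Longrightarrow>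
           fa_mult x (fa_mult a y) \<in> fa_ideal n S"

definition word_img :: "(gen \<Rightarrow> gen list \<Rightarrow> 'l::field) \<Rightarrow> gen list \<Rightarrow> gen list \<Rightarrow> 'l" where
  "word_img \<phi> w = foldr (\<lambda>x acc. fa_mult (\<phi> x) acc) w (mono [])"

definition fa_subst :: "(gen \<Rightarrow> gen list \<Rightarrow> 'l::field) \<Rightarrow> (gen list \<Rightarrow> 'l) \<Rightarrow> gen list \<Rightarrow> 'l" where
  "fa_subst \<phi> f = (\<lambda>x. \<Sum>w\<in>{w. f w \<noteq> 0}. f w * word_img \<phi> w x)"

text \<open>Two-parameter algebra: a = u, b = v;  one-parameter algebra: a = b = q.\<close>
definition bt_rels :: "nat \<Rightarrow> 'l::field \<Rightarrow> 'l \<Rightarrow> (gen list \<Rightarrow> 'l) set" where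
  "bt_rels n a b =
     {fa_diff (mono [E i, E j]) (mono [E j, E i]) | i j. 1 \<le> i \<and> i < n \<and> 1 \<le> j \<and> j < n}
   \<union> {fa_diff (mono [E i, E i]) (mono [E i]) | i. 1 \<le> i \<and> i < n}
   \<union> {fa_diff (mono [E i, G j]) (mono [G j, E i]) | i j. 1 \<le> i \<and> i < n \<and> 1 \<le> j \<and> j < n
          \<and> (i + 1 < j \<or> j + 1 < i)}
   \<union> {fa_diff (mono [E i, G i]) (mono [G i, E i]) | i. 1 \<le> i \<and> i < n}
   \<union> {fa_diff (mono [E i, G j, G i]) (mono [G j, G i, E j]) | i j. 1 \<le> i \<and> i < n \<and> 1 \<le> j \<and> j < n
          \<and> (j = i + 1 \<or> i = j + 1)}
   \<union> {fa_diff (mono [E i, E j, G i]) (mono [E j, G i, E j]) | i j. 1 \<le> i \<and> i < n \<and> 1 \<le> j \<and> j < n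
          \<and> (j = i + 1 \<or> i = j + 1)}
   \<union> {fa_diff (mono [E j, G i, E j]) (mono [G i, E i, E j]) | i j. 1 \<le> i \<and> i < n \<and> 1 \<le> j \<and> j < n
          \<and> (j = i + 1 \<or> i = j + 1)}
   \<union> {fa_diff (mono [G i, G j]) (mono [G j, G i]) | i j. 1 \<le> i \<and> i < n \<and> 1 \<le> j \<and> j < n
          \<and> (i + 1 < j \<or> j + 1 < i)}
   \<union> {fa_diff (mono [G i, G j, G i]) (mono [G j, G i, G j]) | i j. 1 \<le> i \<and> i < n \<and> 1 \<le> j \<and> j < n
          \<and> (j = i + 1 \<or> i = j + 1)}
   \<union> {fa_diff (mono [G i, G i])
        (fa_add (mono []) (fa_add (fa_smul (a - 1) (mono [E i])) (fa_smul (b - 1) (mono [E i, G i]))))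
       | i. 1 \<le> i \<and> i < n}"

text \<open>The assignment \<phi> (letters of the source to elements of the target free algebra) induces an
  algebra isomorphism  F\<langle>letters n\<rangle>/I1  \<rightarrow>  F\<langle>letters n\<rangle>/I2 : the substitution map is a unital
  algebra homomorphism of free algebras, maps I1 into I2 (well defined), the induced map
  is injective and surjective.\<close>
definition induces_iso :: "nat \<Rightarrow> (gen list \<Rightarrow> 'l::field) set \<Rightarrow> (gen list \<Rightarrow> 'l) set
                             \<Rightarrow> (gen \<Rightarrow> gen list \<Rightarrow> 'l) \<Rightarrow> bool" where
  "induces_iso n I1 I2 \<phi> \<longleftrightarrow>
     (\<forall>f\<in>fa_carrier n. fa_subst \<phi> f \<in> fa_carrier n)
   \<and> fa_subst \<phi> (mono []) = mono []
   \<and> (\<forall>f\<in>fa_carrier n. \<forall>g\<in>fa_carrier n. fa_subst \<phi> (fa_add f g) = fa_add (fa_subst \<phi> f) (fa_subst \<phi> g))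
   \<and> (\<forall>c. \<forall>f\<in>fa_carrier n. fa_subst \<phi> (fa_smul c f) = fa_smul c (fa_subst \<phi> f))
   \<and> (\<forall>f\<in>fa_carrier n. \<forall>g\<in>fa_carrier n. fa_subst \<phi> (fa_mult f g) = fa_mult (fa_subst \<phi> f) (fa_subst \<phi> g))
   \<and> (\<forall>f\<in>fa_carrier n. f \<in> I1 \<longrightarrow> fa_subst \<phi> f \<in> I2)
   \<and> (\<forall>f\<in>fa_carrier n. fa_subst \<phi> f \<in> I2 \<longrightarrow> f \<in> I1)
   \<and> (\<forall>g\<in>fa_carrier n. \<exists>f\<in>fa_carrier n. fa_diff (fa_subst \<phi> f) g \<in> I2)"

definition bt_assign :: "'l::field \<Rightarrow> gen \<Rightarrow> gen list \<Rightarrow> 'l" where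
  "bt_assign \<delta> x = (case x of
      G i \<Rightarrow> fa_add (mono [G i]) (fa_smul \<delta> (mono [E i, G i]))
    | E i \<Rightarrow> mono [E i])"

end

theory Submission
  imports Defs "HOL-Library.Poly_Mapping"
begin


definition ideal_in :: "'a::ring_1 set \<Rightarrow> bool" where
  "ideal_in J \<longleftrightarrow> 0 \<in> J \<and> (\<forall>a\<in>J. \<forall>b\<in>J. a + b \<in> J) \<and> (\<forall>a\<in>J. \<forall>x y. x * a * y \<in> J)"

definition cg :: "'a::ring_1 set \<Rightarrow> 'a \<Rightarrow> 'a \<Rightarrow> bool" where
  "cg J a b \<longleftrightarrow> a - b \<in> J"

definition okk :: "nat \<Rightarrow> nat \<Rightarrow> bool" where "okk n i \<longleftrightarrow> 1 \<le> i \<and> i < n"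
definition adj :: "nat \<Rightarrow> nat \<Rightarrow> bool" where "adj i j \<longleftrightarrow> j = i + 1 \<or> i = j + 1"
definition far :: "nat \<Rightarrow> nat \<Rightarrow> bool" where "far i j \<longleftrightarrow> i + 1 < j \<or> j + 1 < i"

lemma adj_sym: "adj i j \<Longrightarrow> adj j i" and far_sym: "far i j \<Longrightarrow> far j i"
  by (auto simp: adj_def far_def)

definition rels :: "'a::ring_1 set \<Rightarrow> ('b::field \<Rightarrow> 'a) \<Rightarrow> (nat \<Rightarrow> 'a) \<Rightarrow> (nat \<Rightarrow> 'a) \<Rightarrow> nat \<Rightarrow> 'b \<Rightarrow> 'b \<Rightarrow> bool" where
  "rels J sc e g n \<alpha> \<beta> \<longleftrightarrow>
    (\<forall>i j. okk n i \<longrightarrow> okk n j \<longrightarrow> cg J (e i * e j) (e j * e i))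
  \<and> (\<forall>i. okk n i \<longrightarrow> cg J (e i * e i) (e i))
  \<and> (\<forall>i j. okk n i \<longrightarrow> okk n j \<longrightarrow> far i j \<longrightarrow> cg J (e i * g j) (g j * e i))
  \<and> (\<forall>i. okk n i \<longrightarrow> cg J (e i * g i) (g i * e i))
  \<and> (\<forall>i j. okk n i \<longrightarrow> okk n j \<longrightarrow> adj i j \<longrightarrow> cg J (e i * (g j * g i)) (g j * (g i * e j)))
  \<and> (\<forall>i j. okk n i \<longrightarrow> okk n j \<longrightarrow> adj i j \<longrightarrow> cg J (e i * (e j * g i)) (e j * (g i * e j)))
  \<and> (\<forall>i j. okk n i \<longrightarrow> okk n j \<longrightarrow> adj i j \<longrightarrow> cg J (e j * (g i * e j)) (g i * (e i * e j)))
  \<and> (\<forall>i j. okk n i \<longrightarrow> okk n j \<longrightarrow> far i j \<longrightarrow> cg J (g i * g j) (g j * g i))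
  \<and> (\<forall>i j. okk n i \<longrightarrow> okk n j \<longrightarrow> adj i j \<longrightarrow> cg J (g i * (g j * g i)) (g j * (g i * g j)))
  \<and> (\<forall>i. okk n i \<longrightarrow> cg J (g i * g i) (1 + (sc \<alpha> * e i + sc \<beta> * (e i * g i))))"

locale btr =
  fixes J :: "'a::ring_1 set" and sc :: "'b::field \<Rightarrow> 'a" and e g :: "nat \<Rightarrow> 'a"
    and n :: nat and \<alpha> \<beta> a :: 'b
  assumes idl: "ideal_in J"
    and sc_add: "sc (c + d) = sc c + sc d" and sc_mult: "sc (c * d) = sc c * sc d"
    and sc_one: "sc 1 = 1" and sc_comm: "sc c * x = x * sc c"
    and R: "rels J sc e g n \<alpha> \<beta>"
    and inv\<alpha>: "1 + \<alpha> \<noteq> 0"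
begin

abbreviation cgJ (infix "\<approx>" 50) where "x \<approx> y \<equiv> cg J x y"

lemma J0: "0 \<in> J" and Jadd: "x \<in> J \<Longrightarrow> y \<in> J \<Longrightarrow> x + y \<in> J"
  and Jmult: "x \<in> J \<Longrightarrow> u * x * v \<in> J"
  using idl by (auto simp: ideal_in_def)

lemma Jneg: "x \<in> J \<Longrightarrow> - x \<in> J"
  using Jmult[of x "-1" 1] by simp

lemma cg_refl[simp]: "x \<approx> x" by (simp add: cg_def J0)
lemma eq_cg: "x = y \<Longrightarrow> x \<approx> y" by simp
lemma cg_sym: "x \<approx> y \<Longrightarrow> y \<approx> x"
  using Jneg[of "x - y"] by (simp add: cg_def)
lemma cg_trans[trans]: "x \<approx> y \<Longrightarrow> y \<approx> z \<Longrightarrow> x \<approx> z"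
  using Jadd[of "x - y" "y - z"] by (simp add: cg_def)
lemma cg_add: "x \<approx> y \<Longrightarrow> u \<approx> v \<Longrightarrow> x + u \<approx> y + v"
  using Jadd[of "x - y" "u - v"] by (simp add: cg_def algebra_simps)
lemma cg_diff: "x \<approx> y \<Longrightarrow> u \<approx> v \<Longrightarrow> x - u \<approx> y - v"
  using Jadd[of "x - y" "-(u - v)"] Jneg[of "u - v"] by (simp add: cg_def algebra_simps)
lemma cg_ctx: "x \<approx> y \<Longrightarrow> u * x * v \<approx> u * y * v"
  using Jmult[of "x - y" u v] by (simp add: cg_def algebra_simps)
lemma cg_l: "x \<approx> y \<Longrightarrow> u * x \<approx> u * y"
  using cg_ctx[of x y u 1] by simp
lemma cg_r: "x \<approx> y \<Longrightarrow> x * v \<approx> y * v"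
  using cg_ctx[of x y 1 v] by simp
lemma cg_mult: "x \<approx> y \<Longrightarrow> u \<approx> v \<Longrightarrow> x * u \<approx> y * v"
  by (rule cg_trans[OF cg_r cg_l])

lemma R1: "okk n i \<Longrightarrow> okk n j \<Longrightarrow> e i * e j \<approx> e j * e i"
  using R by (simp add: rels_def)
lemma R2: "okk n i \<Longrightarrow> e i * e i \<approx> e i"
  using R by (simp add: rels_def)
lemma R3: "okk n i \<Longrightarrow> okk n j \<Longrightarrow> far i j \<Longrightarrow> e i * g j \<approx> g j * e i"
  using R by (simp add: rels_def)
lemma R4: "okk n i \<Longrightarrow> e i * g i \<approx> g i * e i"
  using R by (simp add: rels_def)
lemma R5: "okk n i \<Longrightarrow> okk n j \<Longrightarrow> adj i j \<Longrightarrow> e i * (g j * g i) \<approx> g j * (g i * e j)"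
  using R by (simp add: rels_def)
lemma R6: "okk n i \<Longrightarrow> okk n j \<Longrightarrow> adj i j \<Longrightarrow> e i * (e j * g i) \<approx> e j * (g i * e j)"
  using R by (simp add: rels_def)
lemma R7: "okk n i \<Longrightarrow> okk n j \<Longrightarrow> adj i j \<Longrightarrow> e j * (g i * e j) \<approx> g i * (e i * e j)"
  using R by (simp add: rels_def)
lemma R8: "okk n i \<Longrightarrow> okk n j \<Longrightarrow> far i j \<Longrightarrow> g i * g j \<approx> g j * g i"
  using R by (simp add: rels_def)
lemma R9: "okk n i \<Longrightarrow> okk n j \<Longrightarrow> adj i j \<Longrightarrow> g i * (g j * g i) \<approx> g j * (g i * g j)"
  using R by (simp add: rels_def)
lemma R10: "okk n i \<Longrightarrow> g i * g i \<approx> 1 + (sc \<alpha> * e i + sc \<beta> * (e i * g i))"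
  using R by (simp add: rels_def)

lemma scl: "x * (sc c * y) = sc c * (x * y)"
  by (metis mult.assoc sc_comm)
lemma scr: "x * sc c = sc c * x" by (simp add: sc_comm)
lemma sc_zero: "sc 0 = 0"
  using sc_add[of 0 0] by simp

definition f :: "nat \<Rightarrow> 'a" where "f i = 1 + sc a * e i"

lemma el: "e i * (sc c * y) = sc c * (e i * y)" and gl: "g i * (sc c * y) = sc c * (g i * y)"
  and fl: "f i * (sc c * y) = sc c * (f i * y)"
  and er: "e i * sc c = sc c * e i" and gr: "g i * sc c = sc c * g i" and fr: "f i * sc c = sc c * f i"
  and scsc: "sc c * (sc d * y) = sc (c * d) * y"
  by (rule scl scr | simp add: sc_mult mult.assoc)+

lemmas scs = el gl fl er gr fr scsc

lemma cgl2: "x \<approx> y \<Longrightarrow> u * (x * v) \<approx> u * (y * v)"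
  using cg_ctx[of x y u v] by (simp add: mult.assoc)

definition gp :: "nat \<Rightarrow> 'a" where "gp i = f i * g i"

lemma L1: assumes "okk n i" "okk n j" shows "e i * f j \<approx> f j * e i"
proof -
  have "e i * f j = e i + sc a * (e i * e j)" by (simp add: f_def algebra_simps scs)
  also have "\<dots> \<approx> e i + sc a * (e j * e i)" by (rule cg_add[OF cg_refl cg_l[OF R1[OF assms]]])
  also have "\<dots> = f j * e i" by (simp add: f_def algebra_simps scs)
  finally show ?thesis .
qed

lemma L2: assumes "okk n i" "okk n j" shows "f i * f j \<approx> f j * f i"
proof -
  have "f i * f j = 1 + sc a * e i + sc a * e j + sc a * (sc a * (e i * e j))" by (simp add: f_def algebra_simps scs)
  also have "\<dots> \<approx> 1 + sc a * e i + sc a * e j + sc a * (sc a * (e j * e i))"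
    by (rule cg_add[OF cg_refl cg_l[OF cg_l[OF R1[OF assms]]]])
  also have "\<dots> = f j * f i" by (simp add: f_def algebra_simps scs)
  finally show ?thesis .
qed

lemma L3: assumes "okk n i" shows "f i * g i \<approx> g i * f i"
proof -
  have "f i * g i = g i + sc a * (e i * g i)" by (simp add: f_def algebra_simps scs)
  also have "\<dots> \<approx> g i + sc a * (g i * e i)" by (rule cg_add[OF cg_refl cg_l[OF R4[OF assms]]])
  also have "\<dots> = g i * f i" by (simp add: f_def algebra_simps scs)
  finally show ?thesis .
qed

lemma L4: assumes "okk n i" "okk n j" "far i j" shows "g i * f j \<approx> f j * g i"
proof -
  have "g i * f j = g i + sc a * (g i * e j)" by (simp add: f_def algebra_simps scs)
  also have "\<dots> \<approx> g i + sc a * (e j * g i)"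
    by (rule cg_add[OF cg_refl cg_l[OF cg_sym[OF R3[OF assms(2,1) far_sym[OF assms(3)]]]]])
  also have "\<dots> = f j * g i" by (simp add: f_def algebra_simps scs)
  finally show ?thesis .
qed

lemma C3: assumes "okk n i" "okk n j" "far i j" shows "e i * gp j \<approx> gp j * e i"
proof -
  have "e i * gp j = (e i * f j) * g j" by (simp add: gp_def mult.assoc)
  also have "\<dots> \<approx> (f j * e i) * g j" by (rule cg_r[OF L1[OF assms(1,2)]])
  also have "\<dots> = f j * (e i * g j)" by (simp add: mult.assoc)
  also have "\<dots> \<approx> f j * (g j * e i)" by (rule cg_l[OF R3[OF assms]])
  also have "\<dots> = gp j * e i" by (simp add: gp_def mult.assoc)
  finally show ?thesis .
qed

lemma C4: assumes "okk n i" shows "e i * gp i \<approx> gp i * e i"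
proof -
  have "e i * gp i = (e i * f i) * g i" by (simp add: gp_def mult.assoc)
  also have "\<dots> \<approx> (f i * e i) * g i" by (rule cg_r[OF L1[OF assms assms]])
  also have "\<dots> = f i * (e i * g i)" by (simp add: mult.assoc)
  also have "\<dots> \<approx> f i * (g i * e i)" by (rule cg_l[OF R4[OF assms]])
  also have "\<dots> = gp i * e i" by (simp add: gp_def mult.assoc)
  finally show ?thesis .
qed

lemma C5: assumes "okk n i" "okk n j" "adj i j" shows "e i * (gp j * gp i) \<approx> gp j * (gp i * e j)"
proof -
  have "e i * (gp j * gp i) = (e i * f j) * (g j * (f i * g i))" by (simp add: gp_def mult.assoc)
  also have "\<dots> \<approx> (f j * e i) * (g j * (f i * g i))" by (rule cg_r[OF L1[OF assms(1,2)]])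
  also have "\<dots> \<approx> (f j * e i) * (g j * (g i * f i))" by (rule cg_l[OF cg_l[OF L3[OF assms(1)]]])
  also have "\<dots> = f j * (e i * (g j * g i)) * f i" by (simp add: mult.assoc)
  also have "\<dots> \<approx> f j * (g j * (g i * e j)) * f i" by (rule cg_ctx[OF R5[OF assms]])
  also have "\<dots> = (f j * g j * g i) * (e j * f i)" by (simp add: mult.assoc)
  also have "\<dots> \<approx> (f j * g j * g i) * (f i * e j)" by (rule cg_l[OF L1[OF assms(2,1)]])
  also have "\<dots> = (f j * g j) * (g i * f i) * e j" by (simp add: mult.assoc)
  also have "\<dots> \<approx> (f j * g j) * (f i * g i) * e j" by (rule cg_r[OF cg_l[OF cg_sym[OF L3[OF assms(1)]]]])
  also have "\<dots> = gp j * (gp i * e j)" by (simp add: gp_def mult.assoc)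
  finally show ?thesis .
qed

lemma C6: assumes "okk n i" "okk n j" "adj i j" shows "e i * (e j * gp i) \<approx> e j * (gp i * e j)"
proof -
  have "e i * (e j * gp i) = e i * (e j * f i) * g i" by (simp add: gp_def mult.assoc)
  also have "\<dots> \<approx> e i * (f i * e j) * g i" by (rule cg_ctx[OF L1[OF assms(2,1)]])
  also have "\<dots> = (e i * f i) * (e j * g i)" by (simp add: mult.assoc)
  also have "\<dots> \<approx> (f i * e i) * (e j * g i)" by (rule cg_r[OF L1[OF assms(1,1)]])
  also have "\<dots> = f i * (e i * (e j * g i))" by (simp add: mult.assoc)
  also have "\<dots> \<approx> f i * (e j * (g i * e j))" by (rule cg_l[OF R6[OF assms]])
  also have "\<dots> = (f i * e j) * (g i * e j)" by (simp add: mult.assoc)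
  also have "\<dots> \<approx> (e j * f i) * (g i * e j)" by (rule cg_r[OF cg_sym[OF L1[OF assms(2,1)]]])
  also have "\<dots> = e j * (gp i * e j)" by (simp add: gp_def mult.assoc)
  finally show ?thesis .
qed

lemma C7: assumes "okk n i" "okk n j" "adj i j" shows "e j * (gp i * e j) \<approx> gp i * (e i * e j)"
proof -
  have "e j * (gp i * e j) = (e j * f i) * (g i * e j)" by (simp add: gp_def mult.assoc)
  also have "\<dots> \<approx> (f i * e j) * (g i * e j)" by (rule cg_r[OF L1[OF assms(2,1)]])
  also have "\<dots> = f i * (e j * (g i * e j))" by (simp add: mult.assoc)
  also have "\<dots> \<approx> f i * (g i * (e i * e j))" by (rule cg_l[OF R7[OF assms]])
  also have "\<dots> = gp i * (e i * e j)" by (simp add: gp_def mult.assoc)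
  finally show ?thesis .
qed

lemma C8: assumes "okk n i" "okk n j" "far i j" shows "gp i * gp j \<approx> gp j * gp i"
proof -
  have "gp i * gp j = f i * (g i * f j) * g j" by (simp add: gp_def mult.assoc)
  also have "\<dots> \<approx> f i * (f j * g i) * g j" by (rule cg_ctx[OF L4[OF assms]])
  also have "\<dots> = (f i * f j) * (g i * g j)" by (simp add: mult.assoc)
  also have "\<dots> \<approx> (f j * f i) * (g i * g j)" by (rule cg_r[OF L2[OF assms(1,2)]])
  also have "\<dots> \<approx> (f j * f i) * (g j * g i)" by (rule cg_l[OF R8[OF assms]])
  also have "\<dots> = f j * (f i * g j) * g i" by (simp add: mult.assoc)
  also have "\<dots> \<approx> f j * (g j * f i) * g i" by (rule cg_ctx[OF cg_sym[OF L4[OF assms(2,1) far_sym[OF assms(3)]]]])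
  also have "\<dots> = gp j * gp i" by (simp add: gp_def mult.assoc)
  finally show ?thesis .
qed

lemma scc1: "sc c * (sc d * y) = sc d * (sc c * y)" and scc2: "sc c * sc d = sc d * sc c"
  by (rule scl, rule sc_comm)
lemmas scn = el gl er gr sc_add sc_mult scc1 scc2

context
  fixes i j assumes oi: "okk n i" and oj: "okk n j" and aij: "adj i j"
begin

lemma K1: "g i * (e i * e j) \<approx> e i * (e j * g i)"
  by (rule cg_sym[OF cg_trans[OF R6[OF oi oj aij] R7[OF oi oj aij]]])

lemma K2: "e j * (g j * e i) \<approx> e j * (e i * g j)"
proof -
  have "e j * (g j * e i) = (e j * g j) * e i" by (simp add: mult.assoc)
  also have "\<dots> \<approx> (g j * e j) * e i" by (rule cg_r[OF R4[OF oj]])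
  also have "\<dots> = g j * (e j * e i)" by (simp add: mult.assoc)
  also have "\<dots> \<approx> e j * (e i * g j)" by (rule cg_sym[OF cg_trans[OF R6[OF oj oi adj_sym[OF aij]] R7[OF oj oi adj_sym[OF aij]]]])
  finally show ?thesis .
qed

lemma B1: "e j * (g i * (g j * g i)) \<approx> (g i * (g j * g i)) * e i"
proof -
  have "e j * (g i * (g j * g i)) = (e j * (g i * g j)) * g i" by (simp add: mult.assoc)
  also have "\<dots> \<approx> (g i * (g j * e i)) * g i" by (rule cg_r[OF R5[OF oj oi adj_sym[OF aij]]])
  also have "\<dots> = (g i * g j) * (e i * g i)" by (simp add: mult.assoc)
  also have "\<dots> \<approx> (g i * g j) * (g i * e i)" by (rule cg_l[OF R4[OF oi]])
  also have "\<dots> = (g i * (g j * g i)) * e i" by (simp add: mult.assoc)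
  finally show ?thesis .
qed

end

definition D where "D i j = g i * (g j * g i)"
definition X where "X i j = g i * (e j * (g j * g i))"
definition W where "W i j = e i * (e j * D i j)"

context
  fixes i j assumes oi: "okk n i" and oj: "okk n j" and aij: "adj i j"
begin

lemma aji: "adj j i" using adj_sym[OF aij] .

lemma B2: "e i * D i j \<approx> D i j * e j"
proof -
  have "e i * D i j \<approx> e i * D j i" unfolding D_def by (rule cg_l[OF R9[OF oi oj aij]])
  also have "\<dots> \<approx> D j i * e j" unfolding D_def by (rule B1[OF oj oi aji])
  also have "\<dots> \<approx> D i j * e j" unfolding D_def by (rule cg_r[OF cg_sym[OF R9[OF oi oj aij]]])
  finally show ?thesis .
qed

lemma B3: "f i * D i j \<approx> D i j * f j"
proof -
  have "f i * D i j = D i j + sc a * (e i * D i j)" by (simp add: f_def algebra_simps scs)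
  also have "\<dots> \<approx> D i j + sc a * (D i j * e j)" by (rule cg_add[OF cg_refl cg_l[OF B2]])
  also have "\<dots> = D i j * f j" by (simp add: f_def distrib_left scl)
  finally show ?thesis .
qed

lemma B4: "e i * X i j \<approx> W i j"
proof -
  have "e i * X i j = (e i * g i) * (e j * (g j * g i))" by (simp add: X_def mult.assoc)
  also have "\<dots> \<approx> (g i * e i) * (e j * (g j * g i))" by (rule cg_r[OF R4[OF oi]])
  also have "\<dots> = (g i * (e i * e j)) * (g j * g i)" by (simp add: mult.assoc)
  also have "\<dots> \<approx> (e i * (e j * g i)) * (g j * g i)" by (rule cg_r[OF K1[OF oi oj aij]])
  also have "\<dots> = W i j" by (simp add: W_def D_def mult.assoc)
  finally show ?thesis .
qed

lemma P4: "g i * (e j * (g j * e i)) * g i \<approx> W i j"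
proof -
  have "g i * (e j * (g j * e i)) * g i \<approx> g i * (e j * (e i * g j)) * g i" by (rule cg_ctx[OF K2[OF oi oj aij]])
  also have "\<dots> = g i * (e j * e i) * (g j * g i)" by (simp add: mult.assoc)
  also have "\<dots> \<approx> g i * (e i * e j) * (g j * g i)" by (rule cg_r[OF cg_l[OF R1[OF oj oi]]])
  also have "\<dots> \<approx> (e i * (e j * g i)) * (g j * g i)" by (rule cg_r[OF K1[OF oi oj aij]])
  also have "\<dots> = W i j" by (simp add: W_def D_def mult.assoc)
  finally show ?thesis .
qed

lemma B5: "X i j * e i \<approx> W i j"
proof -
  have "X i j * e i = (g i * e j * g j) * (g i * e i)" by (simp add: X_def mult.assoc)
  also have "\<dots> \<approx> (g i * e j * g j) * (e i * g i)" by (rule cg_l[OF cg_sym[OF R4[OF oi]]])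
  also have "\<dots> = g i * (e j * (g j * e i)) * g i" by (simp add: mult.assoc)
  also have "\<dots> \<approx> W i j" by (rule P4)
  finally show ?thesis .
qed

lemma B6: "e i * X i j * e i \<approx> W i j"
proof -
  have "e i * X i j * e i \<approx> W i j * e i" by (rule cg_r[OF B4])
  also have "\<dots> = e i * e j * (D i j * e i)" by (simp add: W_def mult.assoc)
  also have "\<dots> \<approx> e i * e j * (e j * D i j)" unfolding D_def by (rule cg_l[OF cg_sym[OF B1[OF oi oj aij]]])
  also have "\<dots> = e i * (e j * e j) * D i j" by (simp add: mult.assoc)
  also have "\<dots> \<approx> e i * e j * D i j" by (rule cg_r[OF cg_l[OF R2[OF oj]]])
  also have "\<dots> = W i j" by (simp add: W_def mult.assoc)
  finally show ?thesis .
qed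

lemma B7: "f i * X i j * f i \<approx> X i j + sc a * W i j + sc a * W i j + sc a * (sc a * W i j)"
proof -
  have "f i * X i j * f i = X i j + sc a * (e i * X i j) + sc a * (X i j * e i) + sc a * (sc a * (e i * X i j * e i))"
    by (simp add: f_def algebra_simps el er scl[of "X i j"] scr[of "X i j"])
  also have "\<dots> \<approx> X i j + sc a * W i j + sc a * W i j + sc a * (sc a * W i j)"
    by (intro cg_add cg_refl cg_l B4 B5 B6)
  finally show ?thesis .
qed

end

definition \<gamma> where "\<gamma> = 1 / (1 + \<alpha>) - 1"
definition h where "h i = (g i - sc \<beta> * e i) * (1 + sc \<gamma> * e i)"

lemma hinv: assumes oi: "okk n i" shows "g i * h i \<approx> 1"
proof -
  have ag: "\<alpha> + \<gamma> + \<alpha> * \<gamma> = 0" using inv\<alpha> by (simp add: \<gamma>_def field_simps)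
  have "g i * (g i - sc \<beta> * e i) = g i * g i - sc \<beta> * (g i * e i)" by (simp add: algebra_simps scs)
  also have "\<dots> \<approx> (1 + (sc \<alpha> * e i + sc \<beta> * (e i * g i))) - sc \<beta> * (e i * g i)"
    by (rule cg_diff[OF R10[OF oi] cg_l[OF cg_sym[OF R4[OF oi]]]])
  also have "\<dots> = 1 + sc \<alpha> * e i" by simp
  finally have 1: "g i * (g i - sc \<beta> * e i) \<approx> 1 + sc \<alpha> * e i" .
  have "g i * h i = (g i * (g i - sc \<beta> * e i)) * (1 + sc \<gamma> * e i)" by (simp add: h_def mult.assoc)
  also have "\<dots> \<approx> (1 + sc \<alpha> * e i) * (1 + sc \<gamma> * e i)" by (rule cg_r[OF 1])
  also have "\<dots> = 1 + sc \<alpha> * e i + sc \<gamma> * e i + sc \<alpha> * (sc \<gamma> * (e i * e i))"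
    by (simp add: algebra_simps scs)
  also have "\<dots> \<approx> 1 + sc \<alpha> * e i + sc \<gamma> * e i + sc \<alpha> * (sc \<gamma> * e i)"
    by (rule cg_add[OF cg_refl cg_l[OF cg_l[OF R2[OF oi]]]])
  also have "\<dots> = 1 + sc (\<alpha> + \<gamma> + \<alpha> * \<gamma>) * e i" by (simp add: sc_add sc_mult algebra_simps)
  also have "\<dots> = 1" by (simp add: ag sc_zero)
  finally show ?thesis .
qed

context
  fixes i j assumes oi: "okk n i" and oj: "okk n j" and aij: "adj i j"
begin

lemma aji': "adj j i" using adj_sym[OF aij] .

lemma P1: "X i j * g i \<approx> g i * (e j * g j) + sc \<alpha> * (g i * (e j * (g j * e i)))
    + sc \<beta> * (g i * (e j * (g j * e i)) * g i)"
proof -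
  have "X i j * g i = (g i * (e j * g j)) * (g i * g i)" by (simp add: X_def mult.assoc)
  also have "\<dots> \<approx> (g i * (e j * g j)) * (1 + (sc \<alpha> * e i + sc \<beta> * (e i * g i)))"
    by (rule cg_l[OF R10[OF oi]])
  also have "\<dots> = g i * (e j * g j) + sc \<alpha> * (g i * (e j * (g j * e i)))
    + sc \<beta> * (g i * (e j * (g j * e i)) * g i)" by (simp add: algebra_simps scs)
  finally show ?thesis .
qed

lemma P2: "X j i * g i \<approx> g i * (e j * g j) + sc \<alpha> * (e j * (g i * (e j * g j)))
    + sc \<beta> * (e j * (g j * (g i * (e j * g j))))"
proof -
  have "X j i * g i = g j * e i * D i j" by (simp add: X_def D_def mult.assoc)
  also have "\<dots> \<approx> g j * e i * D j i" unfolding D_def by (rule cg_l[OF R9[OF oi oj aij]])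
  also have "\<dots> = g j * (e i * (g j * g i)) * g j" by (simp add: D_def mult.assoc)
  also have "\<dots> \<approx> g j * (g j * (g i * e j)) * g j" by (rule cg_ctx[OF R5[OF oi oj aij]])
  also have "\<dots> = (g j * g j) * (g i * (e j * g j))" by (simp add: mult.assoc)
  also have "\<dots> \<approx> (1 + (sc \<alpha> * e j + sc \<beta> * (e j * g j))) * (g i * (e j * g j))"
    by (rule cg_r[OF R10[OF oj]])
  also have "\<dots> = g i * (e j * g j) + sc \<alpha> * (e j * (g i * (e j * g j)))
    + sc \<beta> * (e j * (g j * (g i * (e j * g j))))" by (simp add: algebra_simps scs)
  finally show ?thesis .
qed

lemma P3: "g i * (e j * (g j * e i)) \<approx> e j * (g i * (e j * g j))"
proof -
  have "g i * (e j * (g j * e i)) \<approx> g i * (e j * (e i * g j))" by (rule cg_l[OF K2[OF oi oj aij]])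
  also have "\<dots> = g i * (e j * e i) * g j" by (simp add: mult.assoc)
  also have "\<dots> \<approx> g i * (e i * e j) * g j" by (rule cg_r[OF cg_l[OF R1[OF oj oi]]])
  also have "\<dots> \<approx> e j * (g i * e j) * g j" by (rule cg_r[OF cg_sym[OF R7[OF oi oj aij]]])
  also have "\<dots> = e j * (g i * (e j * g j))" by (simp add: mult.assoc)
  finally show ?thesis .
qed

lemma P5: "e j * (g j * (g i * (e j * g j))) \<approx> W i j"
proof -
  have "e j * (g j * (g i * (e j * g j))) = e j * (g j * (g i * e j)) * g j" by (simp add: mult.assoc)
  also have "\<dots> \<approx> e j * (e i * (g j * g i)) * g j" by (rule cg_ctx[OF cg_sym[OF R5[OF oi oj aij]]])
  also have "\<dots> = (e j * e i) * D j i" by (simp add: D_def mult.assoc)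
  also have "\<dots> \<approx> (e i * e j) * D j i" by (rule cg_r[OF R1[OF oj oi]])
  also have "\<dots> \<approx> (e i * e j) * D i j" unfolding D_def by (rule cg_l[OF cg_sym[OF R9[OF oi oj aij]]])
  also have "\<dots> = W i j" by (simp add: W_def mult.assoc)
  finally show ?thesis .
qed

lemma B8: "X i j \<approx> X j i"
proof -
  have 1: "X i j * g i \<approx> X j i * g i"
  proof -
    have "X i j * g i \<approx> g i * (e j * g j) + sc \<alpha> * (g i * (e j * (g j * e i)))
    + sc \<beta> * (g i * (e j * (g j * e i)) * g i)" by (rule P1)
    also have "\<dots> \<approx> g i * (e j * g j) + sc \<alpha> * (e j * (g i * (e j * g j)))
    + sc \<beta> * (e j * (g j * (g i * (e j * g j))))"
      by (rule cg_add[OF cg_add[OF cg_refl cg_l[OF P3]] cg_l[OF cg_trans[OF P4[OF oi oj aij] cg_sym[OF P5]]]])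
    also have "\<dots> \<approx> X j i * g i" by (rule cg_sym[OF P2])
    finally show ?thesis .
  qed
  have "X i j = X i j * 1" by simp
  also have "\<dots> \<approx> X i j * (g i * h i)" by (rule cg_l[OF cg_sym[OF hinv[OF oi]]])
  also have "\<dots> = (X i j * g i) * h i" by (simp add: mult.assoc)
  also have "\<dots> \<approx> (X j i * g i) * h i" by (rule cg_r[OF 1])
  also have "\<dots> = X j i * (g i * h i)" by (simp add: mult.assoc)
  also have "\<dots> \<approx> X j i * 1" by (rule cg_l[OF hinv[OF oi]])
  finally show ?thesis by simp
qed

definition Z where "Z = D i j * (f j * f i) + sc a * (X i j + sc a * W i j + sc a * W i j + sc a * (sc a * W i j))"

lemma B9: "gp i * (gp j * gp i) \<approx> Z"
proof -
  have "gp i * (gp j * gp i) = (f i * g i * f j * g j) * (f i * g i)" by (simp add: gp_def mult.assoc)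
  also have "\<dots> \<approx> (f i * g i * f j * g j) * (g i * f i)" by (rule cg_l[OF L3[OF oi]])
  also have "\<dots> = f i * (g i * f j * g j * g i) * f i" by (simp add: mult.assoc)
  also have "g i * f j * g j * g i = D i j + sc a * X i j" by (simp add: f_def D_def X_def algebra_simps scs)
  also have "f i * (D i j + sc a * X i j) * f i = (f i * D i j) * f i + sc a * (f i * X i j * f i)"
    by (simp add: algebra_simps scs)
  also have "\<dots> \<approx> (D i j * f j) * f i + sc a * (X i j + sc a * W i j + sc a * W i j + sc a * (sc a * W i j))"
    by (rule cg_add[OF cg_r[OF B3[OF oi oj aij]] cg_l[OF B7[OF oi oj aij]]])
  also have "\<dots> = Z" by (simp add: Z_def mult.assoc)
  finally show ?thesis .
qed

end

lemma B10: assumes oi: "okk n i" and oj: "okk n j" and aij: "adj i j" shows "Z i j \<approx> Z j i"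
proof -
  have w: "W i j \<approx> W j i" unfolding W_def D_def
    using cg_mult[OF R1[OF oi oj] R9[OF oi oj aij]] by (simp add: mult.assoc)
  have d: "D i j \<approx> D j i" unfolding D_def by (rule R9[OF oi oj aij])
  show ?thesis unfolding Z_def[OF oi oj aij] Z_def[OF oj oi adj_sym[OF aij]]
    by (rule cg_add[OF cg_mult[OF d L2[OF oj oi]] cg_l[OF cg_add[OF cg_add[OF cg_add[OF B8[OF oi oj aij] cg_l[OF w]] cg_l[OF w]] cg_l[OF cg_l[OF w]]]]])
qed

lemma C9: assumes oi: "okk n i" and oj: "okk n j" and aij: "adj i j"
  shows "gp i * (gp j * gp i) \<approx> gp j * (gp i * gp j)"
  using cg_trans[OF cg_trans[OF B9[OF oi oj aij] B10[OF oi oj aij]] cg_sym[OF B9[OF oj oi adj_sym[OF aij]]]] .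

definition s where "s = a + a + a * a"

lemma C10: assumes oi: "okk n i"
  shows "gp i * gp i \<approx> 1 + (sc (\<alpha> + s + s * \<alpha>) * e i + sc (\<beta> * (1 + a)) * (e i * gp i))"
proof -
  have ff: "f i * f i \<approx> 1 + sc s * e i"
  proof -
    have "f i * f i = 1 + sc a * e i + sc a * e i + sc a * (sc a * (e i * e i))" by (simp add: f_def algebra_simps scs)
    also have "\<dots> \<approx> 1 + sc a * e i + sc a * e i + sc a * (sc a * e i)" by (rule cg_add[OF cg_refl cg_l[OF cg_l[OF R2[OF oi]]]])
    also have "\<dots> = 1 + sc s * e i" by (simp only: s_def sc_add sc_mult distrib_right mult.assoc add.assoc)
    finally show ?thesis .
  qed
  have egp: "e i * gp i \<approx> sc (1 + a) * (e i * g i)"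
  proof -
    have "e i * gp i = e i * g i + sc a * ((e i * e i) * g i)" by (simp add: gp_def f_def algebra_simps scs)
    also have "\<dots> \<approx> e i * g i + sc a * (e i * g i)" by (rule cg_add[OF cg_refl cg_l[OF cg_r[OF R2[OF oi]]]])
    also have "\<dots> = sc (1 + a) * (e i * g i)" by (simp add: sc_add sc_one algebra_simps)
    finally show ?thesis .
  qed
  have "gp i * gp i = f i * (g i * f i) * g i" by (simp add: gp_def mult.assoc)
  also have "\<dots> \<approx> f i * (f i * g i) * g i" by (rule cg_ctx[OF cg_sym[OF L3[OF oi]]])
  also have "\<dots> = (f i * f i) * (g i * g i)" by (simp add: mult.assoc)
  also have "\<dots> \<approx> (1 + sc s * e i) * (1 + (sc \<alpha> * e i + sc \<beta> * (e i * g i)))" by (rule cg_mult[OF ff R10[OF oi]])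
  also have "\<dots> = 1 + sc \<alpha> * e i + sc \<beta> * (e i * g i) + sc s * e i + sc s * (sc \<alpha> * (e i * e i))
       + sc s * (sc \<beta> * ((e i * e i) * g i))" by (simp add: algebra_simps scs)
  also have "\<dots> \<approx> 1 + sc \<alpha> * e i + sc \<beta> * (e i * g i) + sc s * e i + sc s * (sc \<alpha> * e i)
       + sc s * (sc \<beta> * (e i * g i))"
    by (rule cg_add[OF cg_add[OF cg_refl cg_l[OF cg_l[OF R2[OF oi]]]] cg_l[OF cg_l[OF cg_r[OF R2[OF oi]]]]])
  also have "\<dots> = 1 + (sc (\<alpha> + s + s * \<alpha>) * e i + sc (\<beta> * (1 + a)) * (sc (1 + a) * (e i * g i)))"
  proof -
    have q: "\<beta> * (1 + a) * (1 + a) = \<beta> + s * \<beta>" by (simp add: s_def algebra_simps)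
    have h1: "sc (\<beta> * (1 + a)) * (sc (1 + a) * (e i * g i)) = sc \<beta> * (e i * g i) + sc s * (sc \<beta> * (e i * g i))"
      unfolding scsc q by (simp only: sc_add sc_mult distrib_right mult.assoc)
    have h2: "sc (\<alpha> + s + s * \<alpha>) * e i = sc \<alpha> * e i + sc s * e i + sc s * (sc \<alpha> * e i)"
      by (simp only: sc_add sc_mult distrib_right mult.assoc)
    show ?thesis by (simp only: h1 h2) (simp add: add.assoc add.commute add.left_commute)
  qed
  also have "\<dots> \<approx> 1 + (sc (\<alpha> + s + s * \<alpha>) * e i + sc (\<beta> * (1 + a)) * (e i * gp i))"
    by (rule cg_add[OF cg_refl cg_add[OF cg_refl cg_l[OF cg_sym[OF egp]]]])
  finally show ?thesis .
qed

theorem rels_gp: "rels J sc e gp n (\<alpha> + s + s * \<alpha>) (\<beta> * (1 + a))"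
  unfolding rels_def
  by (intro conjI allI impI; (rule R1 R2 C3 C4 C5 C6 C7 C8 C9 C10; assumption))

end

lemma rels_transfer:
  fixes J :: "'a::ring_1 set" and sc :: "'b::field \<Rightarrow> 'a"
  assumes "ideal_in J" and "\<And>c d. sc (c + d) = sc c + sc d" and "\<And>c d. sc (c * d) = sc c * sc d"
    and "sc 1 = 1" and "\<And>c x. sc c * x = x * sc c" and "rels J sc e g n \<alpha> \<beta>" and "1 + \<alpha> \<noteq> 0"
  shows "rels J sc e (\<lambda>i. (1 + sc a * e i) * g i) n ((1 + a) * (1 + a) * (1 + \<alpha>) - 1) (\<beta> * (1 + a))"
proof -
  interpret btr J sc e g n \<alpha> \<beta> a by (unfold_locales; fact assms)
  have 1: "gp = (\<lambda>i. (1 + sc a * e i) * g i)" by (rule ext) (simp add: gp_def f_def)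
  have 2: "\<alpha> + s + s * \<alpha> = (1 + a) * (1 + a) * (1 + \<alpha>) - 1" by (simp add: s_def algebra_simps)
  show ?thesis using rels_gp by (simp only: 1 2)
qed


instantiation list :: (type) monoid_add
begin
definition zero_list_def: "0 = []"
definition plus_list_def: "xs + ys = xs @ ys"
instance by standard (auto simp: zero_list_def plus_list_def)
end

type_synonym 'l FA = "gen list \<Rightarrow>\<^sub>0 'l"
abbreviation lk :: "('a \<Rightarrow>\<^sub>0 'b::zero) \<Rightarrow> 'a \<Rightarrow> 'b" where "lk \<equiv> Poly_Mapping.lookup"

lemma lookup_mult_fa:
  fixes p q :: "'l::field FA"
  shows "lk (p * q) w = fa_mult (lk p) (lk q) w"
proof -
  have inner: "(\<Sum>b. lk q b when w = l + b) =
      (lk q (drop (length l) w) when take (length l) w = l)" for l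
  proof -
    have "(\<lambda>b. lk q b when w = l + b) =
          (\<lambda>b. if b = drop (length l) w then (lk q b when take (length l) w = l) else 0)"
      by (auto simp: fun_eq_iff plus_list_def when_def append_eq_conv_conj) (metis append_take_drop_id)
    then have "(\<Sum>b. lk q b when w = l + b) = (\<Sum>b. if b = drop (length l) w then (lk q b when take (length l) w = l) else 0)"
      by (rule arg_cong)
    also have "\<dots> = (lk q (drop (length l) w) when take (length l) w = l)"
      by (rule Sum_any.delta)
    finally show ?thesis .
  qed
  let ?S = "(\<lambda>k. take k w) ` {0..length w}"
  have "lk (p * q) w = (\<Sum>l. lk p l * (lk q (drop (length l) w) when take (length l) w = l))"
    unfolding lookup_mult inner by (rule refl)
  also have "\<dots> = (\<Sum>l\<in>?S. lk p l * (lk q (drop (length l) w) when take (length l) w = l))"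
  proof (rule Sum_any.expand_superset)
    show "finite ?S" by simp
    show "{l. lk p l * (lk q (drop (length l) w) when take (length l) w = l) \<noteq> 0} \<subseteq> ?S"
    proof
      fix l assume "l \<in> {l. lk p l * (lk q (drop (length l) w) when take (length l) w = l) \<noteq> 0}"
      then have t: "take (length l) w = l" by (auto simp: when_def split: if_splits)
      then have "length (take (length l) w) = length l" by simp
      then have "length l \<le> length w" by (simp add: min_def split: if_splits)
      with t show "l \<in> ?S" by force
    qed
  qed
  finally have A: "lk (p * q) w = (\<Sum>l\<in>?S. lk p l * (lk q (drop (length l) w) when take (length l) w = l))" .
  have inj: "inj_on (\<lambda>k. take k w) {0..length w}"
    by (rule inj_onI) (metis atLeastAtMost_iff length_take min.absorb2)
  have "(\<Sum>l\<in>?S. lk p l * (lk q (drop (length l) w) when take (length l) w = l))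
     = (\<Sum>k\<in>{0..length w}. lk p (take k w) * (lk q (drop (length (take k w)) w) when take (length (take k w)) w = take k w))"
    by (simp only: sum.reindex[OF inj] o_def)
  also have "\<dots> = (\<Sum>k\<in>{0..length w}. lk p (take k w) * lk q (drop k w))"
    by (rule sum.cong) (auto simp: when_def min_def)
  finally show ?thesis using A by (simp add: fa_mult_def)
qed


definition sc :: "'l::field \<Rightarrow> 'l FA" where "sc c = Poly_Mapping.single [] c"
definition mn :: "gen list \<Rightarrow> 'l::field FA" where "mn w = Poly_Mapping.single w 1"

lemma single_nil_one: "Poly_Mapping.single ([]::gen list) (1::'l::field) = 1"
proof -
  have "Poly_Mapping.single (0::gen list) (1::'l) = 1" by (rule single_one)
  then show ?thesis by (simp add: zero_list_def)
qed

lemma lk_fun_mult: "lk (p * q) = fa_mult (lk p) (lk q)"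
  by (rule ext) (rule lookup_mult_fa)

lemma lk_sc_mult: "lk (sc c * p) w = c * lk p w"
proof -
  have "lk (sc c * p) w = (\<Sum>k\<in>{0..length w}. lk (sc c) (take k w) * lk p (drop k w))"
    by (simp add: lookup_mult_fa fa_mult_def)
  also have "\<dots> = (\<Sum>k\<in>{0..length w}. if k = 0 then c * lk p w else 0)"
    by (rule sum.cong) (auto simp: sc_def lookup_single when_def)
  also have "\<dots> = c * lk p w" by simp
  finally show ?thesis .
qed

lemma lk_mult_sc: "lk (p * sc c) w = lk p w * c"
proof -
  have "lk (p * sc c) w = (\<Sum>k\<in>{0..length w}. lk p (take k w) * lk (sc c) (drop k w))"
    by (simp add: lookup_mult_fa fa_mult_def)
  also have "\<dots> = (\<Sum>k\<in>{0..length w}. if k = length w then lk p w * c else 0)"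
    by (rule sum.cong) (auto simp: sc_def lookup_single when_def)
  also have "\<dots> = lk p w * c" by simp
  finally show ?thesis .
qed

lemma sc_comm: "sc c * p = p * sc c"
  by (rule poly_mapping_eqI) (simp add: lk_sc_mult lk_mult_sc mult.commute)

lemma sc_add: "sc (c + d) = sc c + sc d" by (simp add: sc_def single_add)
lemma sc_mult: "sc (c * d) = sc c * sc d" by (simp add: sc_def mult_single plus_list_def)
lemma sc_one: "sc 1 = 1" by (simp add: sc_def single_nil_one)
lemma sc_zero: "sc 0 = 0" by (simp add: sc_def)

lemma sc_single: "sc c * Poly_Mapping.single w d = Poly_Mapping.single w (c * d)"
  by (simp add: sc_def mult_single plus_list_def)

lemma mn_Cons: "mn (x # w) = mn [x] * mn w"
  by (simp add: mn_def mult_single plus_list_def)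
lemma mn_Nil: "mn [] = 1" by (simp add: mn_def single_nil_one)

lemma lk_mn: "lk (mn w) = mono w"
  by (rule ext) (simp add: mn_def mono_def lookup_single when_def)
lemma lk_plus: "lk (p + q) = fa_add (lk p) (lk q)"
  by (rule ext) (simp add: fa_add_def lookup_add)
lemma lk_minus: "lk (p - q) = fa_diff (lk p) (lk q)"
  by (rule ext) (simp add: fa_diff_def lookup_minus)
lemma lk_scm: "lk (sc c * p) = fa_smul c (lk p)"
  by (rule ext) (simp add: fa_smul_def lk_sc_mult)
lemma lk_zero: "lk 0 = fa_zero"
  by (rule ext) (simp add: fa_zero_def)
lemma lk_one: "lk 1 = mono []"
  using lk_mn[of "[]"] by (simp add: mn_Nil)

lemma lk_inj: "lk p = lk q \<Longrightarrow> p = q"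
  by (simp add: poly_mapping.lookup_inject)

lemma pm_sum: "p = (\<Sum>w\<in>Poly_Mapping.keys p. Poly_Mapping.single w (lk p w))"
  by (rule poly_mapping_eqI) (auto simp: lookup_sum lookup_single when_def in_keys_iff
      sum.delta'[where S="Poly_Mapping.keys p"] cong: sum.cong)

subsection \<open>Substitution homomorphism\<close>

definition wimg :: "(gen \<Rightarrow> 'l::field FA) \<Rightarrow> gen list \<Rightarrow> 'l FA" where
  "wimg \<chi> w = foldr (\<lambda>x acc. \<chi> x * acc) w 1"

definition hom :: "(gen \<Rightarrow> 'l::field FA) \<Rightarrow> 'l FA \<Rightarrow> 'l FA" where
  "hom \<chi> p = (\<Sum>w\<in>Poly_Mapping.keys p. sc (lk p w) * wimg \<chi> w)"

lemma wimg_Nil[simp]: "wimg \<chi> [] = 1" and wimg_Cons[simp]: "wimg \<chi> (x # w) = \<chi> x * wimg \<chi> w"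
  by (simp_all add: wimg_def)

lemma wimg_append: "wimg \<chi> (u @ v) = wimg \<chi> u * wimg \<chi> v"
  by (induction u) (simp_all add: mult.assoc)

lemma hom_add: "hom \<chi> (p + q) = hom \<chi> p + hom \<chi> q"
  unfolding hom_def by (rule setsum_keys_plus_distrib) (simp_all add: sc_zero sc_add distrib_right)

lemma hom_zero: "hom \<chi> 0 = 0" by (simp add: hom_def)

lemma hom_single: "hom \<chi> (Poly_Mapping.single w c) = sc c * wimg \<chi> w"
  by (cases "c = 0") (simp_all add: hom_def sc_zero)

lemma hom_sum: "hom \<chi> (\<Sum>x\<in>S. F x) = (\<Sum>x\<in>S. hom \<chi> (F x))"
  by (induction S rule: infinite_finite_induct) (simp_all add: hom_zero hom_add)

lemma hom_mn: "hom \<chi> (mn w) = wimg \<chi> w"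
  by (simp add: mn_def hom_single sc_one)

lemma hom_one: "hom \<chi> 1 = 1"
  using hom_mn[of \<chi> "[]"] by (simp add: mn_Nil)

lemma hom_neg: "hom \<chi> (- p) = - hom \<chi> p"
  using hom_add[of \<chi> p "-p"] by (simp add: hom_zero) (metis add.inverse_unique)

lemma hom_diff: "hom \<chi> (p - q) = hom \<chi> p - hom \<chi> q"
  using hom_add[of \<chi> p "-q"] by (simp add: hom_neg)

lemma hom_sc: "hom \<chi> (sc c * p) = sc c * hom \<chi> p"
proof -
  have "hom \<chi> (sc c * p) = hom \<chi> (\<Sum>w\<in>Poly_Mapping.keys p. Poly_Mapping.single w (c * lk p w))"
    by (subst pm_sum[of p]) (simp add: sum_distrib_left sc_single)
  also have "\<dots> = (\<Sum>w\<in>Poly_Mapping.keys p. sc c * (sc (lk p w) * wimg \<chi> w))"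
    by (simp add: hom_sum hom_single sc_mult mult.assoc)
  also have "\<dots> = sc c * hom \<chi> p" by (simp add: hom_def sum_distrib_left)
  finally show ?thesis .
qed

lemma hom_mult: "hom \<chi> (p * q) = hom \<chi> p * hom \<chi> q"
proof -
  let ?K = "Poly_Mapping.keys p" and ?L = "Poly_Mapping.keys q"
  have "p * q = (\<Sum>u\<in>?K. \<Sum>v\<in>?L. Poly_Mapping.single u (lk p u) * Poly_Mapping.single v (lk q v))"
    by (subst pm_sum[of p], subst pm_sum[of q]) (rule sum_product)
  also have "\<dots> = (\<Sum>u\<in>?K. \<Sum>v\<in>?L. Poly_Mapping.single (u @ v) (lk p u * lk q v))"
    by (simp add: mult_single plus_list_def)
  finally have pq: "p * q = \<dots>" .
  have "hom \<chi> (p * q) = (\<Sum>u\<in>?K. \<Sum>v\<in>?L. sc (lk p u * lk q v) * wimg \<chi> (u @ v))"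
    by (simp add: pq hom_sum hom_single)
  also have "\<dots> = (\<Sum>u\<in>?K. \<Sum>v\<in>?L. (sc (lk p u) * wimg \<chi> u) * (sc (lk q v) * wimg \<chi> v))"
    by (intro sum.cong refl) (simp add: sc_mult wimg_append mult.assoc, metis mult.assoc sc_comm)
  also have "\<dots> = hom \<chi> p * hom \<chi> q"
    by (simp add: hom_def sum_product)
  finally show ?thesis .
qed

lemma hom_wimg: "hom \<psi> (wimg \<chi> w) = wimg (\<lambda>x. hom \<psi> (\<chi> x)) w"
  by (induction w) (simp_all add: hom_one hom_mult)

lemma hom_comp: "hom \<psi> (hom \<chi> p) = hom (\<lambda>x. hom \<psi> (\<chi> x)) p"
proof -
  have "hom \<psi> (hom \<chi> p) = (\<Sum>w\<in>Poly_Mapping.keys p. sc (lk p w) * hom \<psi> (wimg \<chi> w))"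
    by (simp only: hom_def[of \<chi>] hom_sum hom_sc)
  also have "\<dots> = hom (\<lambda>x. hom \<psi> (\<chi> x)) p"
    by (simp only: hom_wimg hom_def[of "\<lambda>x. hom \<psi> (\<chi> x)"])
  finally show ?thesis .
qed

lemma word_img_lk: "word_img (\<lambda>x. lk (\<chi> x)) w = lk (wimg \<chi> w)"
  by (induction w) (simp_all add: word_img_def lk_one lk_fun_mult)

lemma keys_eq: "{w. lk p w \<noteq> 0} = Poly_Mapping.keys p"
  by (auto simp: in_keys_iff)

lemma fa_subst_lk: "fa_subst (\<lambda>x. lk (\<chi> x)) (lk p) = lk (hom \<chi> p)"
  by (rule ext) (simp add: fa_subst_def hom_def lookup_sum lk_sc_mult keys_eq word_img_lk)


definition Cs :: "nat \<Rightarrow> 'l::field FA set" where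
  "Cs n = {p. \<forall>w\<in>Poly_Mapping.keys p. set w \<subseteq> letters n}"

lemma Cs_zero: "0 \<in> Cs n" by (simp add: Cs_def)

lemma Cs_add: "p \<in> Cs n \<Longrightarrow> q \<in> Cs n \<Longrightarrow> p + q \<in> Cs n"
  unfolding Cs_def using keys_add[of p q] by blast

lemma Cs_minus: assumes "p \<in> Cs n" "q \<in> Cs n" shows "p - q \<in> Cs n"
  unfolding Cs_def
proof (intro CollectI ballI)
  fix w assume "w \<in> Poly_Mapping.keys (p - q)"
  then have "w \<in> Poly_Mapping.keys p \<or> w \<in> Poly_Mapping.keys q"
    by (auto simp: in_keys_iff lookup_minus)
  then show "set w \<subseteq> letters n" using assms by (auto simp: Cs_def)
qed

lemma Cs_mult: "p \<in> Cs n \<Longrightarrow> q \<in> Cs n \<Longrightarrow> p * q \<in> Cs n"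
  unfolding Cs_def using keys_mult[of p q] by (fastforce simp: plus_list_def)

lemma Cs_sc: "p \<in> Cs n \<Longrightarrow> sc c * p \<in> Cs n"
  unfolding Cs_def by (auto simp: in_keys_iff lk_sc_mult)

lemma Cs_single: "set w \<subseteq> letters n \<Longrightarrow> Poly_Mapping.single w c \<in> Cs n"
  unfolding Cs_def by (cases "c = 0") auto

lemma Cs_mn: "set w \<subseteq> letters n \<Longrightarrow> mn w \<in> Cs n"
  by (simp add: mn_def Cs_single)

lemma Cs_one: "1 \<in> Cs n"
  using Cs_mn[of "[]" n] by (simp add: mn_Nil)

lemma Cs_sum: "(\<And>x. x \<in> S \<Longrightarrow> F x \<in> Cs n) \<Longrightarrow> (\<Sum>x\<in>S. F x) \<in> Cs n"
  by (induction S rule: infinite_finite_induct) (simp_all add: Cs_zero Cs_add)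

lemma Cs_wimg: "(\<And>x. x \<in> set w \<Longrightarrow> \<chi> x \<in> Cs n) \<Longrightarrow> wimg \<chi> w \<in> Cs n"
  by (induction w) (simp_all add: Cs_one Cs_mult)

lemma Cs_hom: assumes "\<And>x. x \<in> letters n \<Longrightarrow> \<chi> x \<in> Cs n" "p \<in> Cs n" shows "hom \<chi> p \<in> Cs n"
  unfolding hom_def
proof (rule Cs_sum)
  fix w assume "w \<in> Poly_Mapping.keys p"
  with assms(2) have "set w \<subseteq> letters n" by (auto simp: Cs_def)
  then show "sc (lk p w) * wimg \<chi> w \<in> Cs n" using assms(1) by (intro Cs_sc Cs_wimg) auto
qed

lemma carrier_iff: "f \<in> fa_carrier n \<longleftrightarrow> (\<exists>p\<in>Cs n. f = lk p)"
proof
  assume f: "f \<in> fa_carrier n"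
  then have fin: "finite {w. f w \<noteq> 0}" by (simp add: fa_carrier_def)
  let ?p = "Abs_poly_mapping f"
  have l: "lk ?p = f" using fin by simp
  have "?p \<in> Cs n" using f l by (auto simp: Cs_def fa_carrier_def in_keys_iff)
  with l show "\<exists>p\<in>Cs n. f = lk p" by metis
next
  assume "\<exists>p\<in>Cs n. f = lk p"
  then obtain p where "p \<in> Cs n" "f = lk p" by blast
  then show "f \<in> fa_carrier n" by (auto simp: Cs_def fa_carrier_def in_keys_iff)
qed

lemma lk_Cs_carrier: "p \<in> Cs n \<Longrightarrow> lk p \<in> fa_carrier n"
  using carrier_iff by blast

subsection \<open>Ideals\<close>

inductive_set Id :: "'a::ring_1 set \<Rightarrow> 'a set" for S where
  I0: "0 \<in> Id S"
| Igen: "r \<in> S \<Longrightarrow> r \<in> Id S"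
| Iadd: "a \<in> Id S \<Longrightarrow> b \<in> Id S \<Longrightarrow> a + b \<in> Id S"
| Imult: "a \<in> Id S \<Longrightarrow> x * a * y \<in> Id S"

lemma ideal_Id: "ideal_in (Id S)"
  by (auto simp: ideal_in_def intro: Id.intros)

lemma ideal_neg: "ideal_in J \<Longrightarrow> a \<in> J \<Longrightarrow> - a \<in> J"
  unfolding ideal_in_def by (metis mult_1_right mult_minus1)

lemma ideal_add: "ideal_in J \<Longrightarrow> a \<in> J \<Longrightarrow> b \<in> J \<Longrightarrow> a + b \<in> J"
  unfolding ideal_in_def by blast

lemma ideal_diff: "ideal_in J \<Longrightarrow> a \<in> J \<Longrightarrow> b \<in> J \<Longrightarrow> a - b \<in> J"
  using ideal_add[of J a "-b"] ideal_neg[of J b] by simp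

lemma ideal_lmult: "ideal_in J \<Longrightarrow> a \<in> J \<Longrightarrow> x * a \<in> J"
  unfolding ideal_in_def by (metis mult_1_right)

lemma ideal_mult3: "ideal_in J \<Longrightarrow> a \<in> J \<Longrightarrow> x * a * y \<in> J"
  unfolding ideal_in_def by blast

lemma ideal_zero: "ideal_in J \<Longrightarrow> 0 \<in> J"
  unfolding ideal_in_def by blast

lemma ideal_sum: "ideal_in J \<Longrightarrow> (\<And>x. x \<in> S \<Longrightarrow> F x \<in> J) \<Longrightarrow> (\<Sum>x\<in>S. F x) \<in> J"
  by (induction S rule: infinite_finite_induct) (simp_all add: ideal_zero ideal_add)

lemma Id_hom: assumes J: "ideal_in J" and S: "\<And>r. r \<in> S \<Longrightarrow> hom \<chi> r \<in> J" and p: "p \<in> Id S"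
  shows "hom \<chi> p \<in> J"
  using p by induction (simp_all add: hom_zero hom_add hom_mult S ideal_zero[OF J] ideal_add[OF J] ideal_mult3[OF J])

subsection \<open>Projection onto the letters\<close>

definition pchi :: "nat \<Rightarrow> gen \<Rightarrow> 'l::field FA" where
  "pchi n x = (if x \<in> letters n then mn [x] else 0)"

lemma wimg_pchi: "set w \<subseteq> letters n \<Longrightarrow> wimg (pchi n) w = mn w"
proof (induction w)
  case Nil then show ?case by (simp add: mn_Nil)
next
  case (Cons x w) then show ?case by (simp add: pchi_def mn_Cons[of x w])
qed

lemma hom_pchi: assumes "p \<in> Cs n" shows "hom (pchi n) p = p"
proof -
  have "hom (pchi n) p = (\<Sum>w\<in>Poly_Mapping.keys p. Poly_Mapping.single w (lk p w))"
    unfolding hom_def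
    by (rule sum.cong[OF refl]) (use assms in \<open>auto simp: Cs_def wimg_pchi mn_def sc_single\<close>)
  also have "\<dots> = p" by (rule pm_sum[symmetric])
  finally show ?thesis .
qed

lemma Cs_pchi: "hom (pchi n) p \<in> Cs n"
  unfolding hom_def
  by (rule Cs_sum, rule Cs_sc, rule Cs_wimg) (auto simp: pchi_def Cs_mn Cs_zero)

lemma bridge_a:
  assumes "f \<in> fa_ideal n (lk ` S)" and S: "S \<subseteq> Cs n"
  shows "\<exists>p. f = lk p \<and> p \<in> Id S \<and> p \<in> Cs n"
  using assms(1)
proof induction
  case zero
  then show ?case by (intro exI[of _ 0]) (simp add: lk_zero I0 Cs_zero)
next
  case (gen r)
  then obtain s where "s \<in> S" "r = lk s" by blast
  then show ?case using S by (blast intro: Igen)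
next
  case (add a b)
  then obtain p q where "a = lk p" "p \<in> Id S" "p \<in> Cs n" "b = lk q" "q \<in> Id S" "q \<in> Cs n" by blast
  then show ?case by (intro exI[of _ "p + q"]) (simp add: lk_plus Iadd Cs_add)
next
  case (mult a x y)
  then obtain p where p: "a = lk p" "p \<in> Id S" "p \<in> Cs n" by blast
  from mult obtain x' y' where "x' \<in> Cs n" "x = lk x'" "y' \<in> Cs n" "y = lk y'" by (meson carrier_iff)
  with p show ?case by (intro exI[of _ "x' * p * y'"]) (simp add: lk_fun_mult mult.assoc Imult[of p S x' y', simplified mult.assoc] Cs_mult)
qed

lemma bridge_b:
  assumes "p \<in> Id S" and S: "S \<subseteq> Cs n"
  shows "lk (hom (pchi n) p) \<in> fa_ideal n (lk ` S)"
  using assms(1)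
proof induction
  case I0 then show ?case by (simp add: hom_zero lk_zero fa_ideal.zero)
next
  case (Igen r)
  then have "hom (pchi n) r = r" using S by (blast intro: hom_pchi)
  then show ?case using Igen by (simp add: fa_ideal.gen)
next
  case (Iadd a b) then show ?case by (simp add: hom_add lk_plus fa_ideal.add)
next
  case (Imult a x y)
  have "lk (hom (pchi n) (x * a * y)) = fa_mult (lk (hom (pchi n) x)) (fa_mult (lk (hom (pchi n) a)) (lk (hom (pchi n) y)))"
    by (simp add: hom_mult lk_fun_mult mult.assoc)
  then show ?case using Imult by (simp add: fa_ideal.mult lk_Cs_carrier Cs_pchi)
qed

lemma bridge_b': "p \<in> Id S \<Longrightarrow> S \<subseteq> Cs n \<Longrightarrow> p \<in> Cs n \<Longrightarrow> lk p \<in> fa_ideal n (lk ` S)"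
  using bridge_b[of p S n] hom_pchi[of p n] by simp


definition rl :: "nat \<Rightarrow> 'l::field \<Rightarrow> 'l \<Rightarrow> 'l FA set" where
  "rl n a b =
     {mn [E i, E j] - mn [E j, E i] | i j. 1 \<le> i \<and> i < n \<and> 1 \<le> j \<and> j < n}
   \<union> {mn [E i, E i] - mn [E i] | i. 1 \<le> i \<and> i < n}
   \<union> {mn [E i, G j] - mn [G j, E i] | i j. 1 \<le> i \<and> i < n \<and> 1 \<le> j \<and> j < n
          \<and> (i + 1 < j \<or> j + 1 < i)}
   \<union> {mn [E i, G i] - mn [G i, E i] | i. 1 \<le> i \<and> i < n}
   \<union> {mn [E i, G j, G i] - mn [G j, G i, E j] | i j. 1 \<le> i \<and> i < n \<and> 1 \<le> j \<and> j < n
          \<and> (j = i + 1 \<or> i = j + 1)}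
   \<union> {mn [E i, E j, G i] - mn [E j, G i, E j] | i j. 1 \<le> i \<and> i < n \<and> 1 \<le> j \<and> j < n
          \<and> (j = i + 1 \<or> i = j + 1)}
   \<union> {mn [E j, G i, E j] - mn [G i, E i, E j] | i j. 1 \<le> i \<and> i < n \<and> 1 \<le> j \<and> j < n
          \<and> (j = i + 1 \<or> i = j + 1)}
   \<union> {mn [G i, G j] - mn [G j, G i] | i j. 1 \<le> i \<and> i < n \<and> 1 \<le> j \<and> j < n
          \<and> (i + 1 < j \<or> j + 1 < i)}
   \<union> {mn [G i, G j, G i] - mn [G j, G i, G j] | i j. 1 \<le> i \<and> i < n \<and> 1 \<le> j \<and> j < n
          \<and> (j = i + 1 \<or> i = j + 1)}
   \<union> {mn [G i, G i] - (mn [] + (sc (a - 1) * mn [E i] + sc (b - 1) * mn [E i, G i]))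
       | i. 1 \<le> i \<and> i < n}"

lemma img2: "f ` {F i j | i j. P i j} = {f (F i j) | i j. P i j}" by blast
lemma img1: "f ` {F i | i. P i} = {f (F i) | i. P i}" by blast

lemma lk_rl: "lk ` rl n a b = bt_rels n a b"
  unfolding rl_def bt_rels_def image_Un img2 img1 lk_minus lk_mn lk_plus lk_scm ..

lemma rl_Cs: "rl n a b \<subseteq> Cs n"
  unfolding rl_def by (auto intro!: Cs_minus Cs_add Cs_sc Cs_mn simp: letters_def)

lemma mn_Cons2: "mn (x # y # w) = mn [x] * mn (y # w)"
  by (rule mn_Cons)

lemma rels_rl: "rels (Id (rl n a b)) sc (\<lambda>i. mn [E i]) (\<lambda>i. mn [G i]) n (a - 1) (b - 1)"
  unfolding rels_def cg_def okk_def adj_def far_def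
  by (intro conjI allI impI; rule Igen; unfold rl_def; simp only: mn_Cons2 mn_Nil; blast)

lemma rl_hom:
  assumes J: "ideal_in J" and R: "rels J sc e g n (a - 1) (b - 1)"
    and cE: "\<And>i. 1 \<le> i \<Longrightarrow> i < n \<Longrightarrow> \<chi> (E i) = e i"
    and cG: "\<And>i. 1 \<le> i \<Longrightarrow> i < n \<Longrightarrow> \<chi> (G i) = g i"
    and r: "r \<in> rl n a b"
  shows "hom \<chi> r \<in> J"
  using R r unfolding rels_def cg_def okk_def adj_def far_def rl_def
  by (elim UnE CollectE exE conjE; simp only: hom_diff hom_add hom_sc hom_mn wimg_Cons wimg_Nil mult_1_right cE cG; blast)


lemma ideal_rmult: "ideal_in J \<Longrightarrow> a \<in> J \<Longrightarrow> a * y \<in> J"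
  using ideal_mult3[of J a 1 y] by simp

lemma hom_close:
  assumes J: "ideal_in J" and cl: "\<And>x. x \<in> letters n \<Longrightarrow> \<chi> x - mn [x] \<in> J" and p: "p \<in> Cs n"
  shows "hom \<chi> p - p \<in> J"
proof -
  have w: "set w \<subseteq> letters n \<Longrightarrow> wimg \<chi> w - mn w \<in> J" for w
  proof (induction w)
    case Nil then show ?case by (simp add: mn_Nil ideal_zero[OF J])
  next
    case (Cons x w)
    have "wimg \<chi> (x # w) - mn (x # w) = (\<chi> x - mn [x]) * wimg \<chi> w + mn [x] * (wimg \<chi> w - mn w)"
      by (simp add: mn_Cons[of x w] algebra_simps)
    then show ?case using Cons cl by (simp add: ideal_add[OF J] ideal_rmult[OF J] ideal_lmult[OF J])
  qed
  have pe: "(\<Sum>w\<in>Poly_Mapping.keys p. sc (lk p w) * mn w) = p"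
    by (simp add: mn_def sc_single pm_sum[symmetric])
  have "hom \<chi> p - p = (\<Sum>w\<in>Poly_Mapping.keys p. sc (lk p w) * wimg \<chi> w) - (\<Sum>w\<in>Poly_Mapping.keys p. sc (lk p w) * mn w)"
    by (simp only: hom_def pe)
  also have "\<dots> = (\<Sum>w\<in>Poly_Mapping.keys p. sc (lk p w) * (wimg \<chi> w - mn w))"
    by (simp add: sum_subtractf right_diff_distrib)
  also have "\<dots> \<in> J"
    using p w by (intro ideal_sum[OF J] ideal_lmult[OF J]) (auto simp: Cs_def)
  finally show ?thesis .
qed

lemma hom_scc: "hom \<chi> (sc c) = sc c"
  by (simp add: sc_def hom_single)

lemma scl_FA: "z * (sc c * w) = sc c * (z * w)"
  by (metis mult.assoc sc_comm)

lemma comp_letter: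
  assumes J: "ideal_in J" and ee: "e * e - e \<in> J" and xy: "x + y + x * y = 0"
  shows "(g + sc y * (e * g)) + sc x * (e * (g + sc y * (e * g))) - g \<in> J"
proof -
  have "(g + sc y * (e * g)) + sc x * (e * (g + sc y * (e * g))) - g
      = sc x * (sc y * ((e * e - e) * g)) + sc (x + y + x * y) * (e * g)"
    by (simp add: algebra_simps sc_add sc_mult scl_FA[of e])
  also have "\<dots> = sc x * (sc y * ((e * e - e) * g))" by (simp add: xy sc_zero)
  also have "\<dots> \<in> J" by (intro ideal_lmult[OF J] ideal_rmult[OF J] ee)
  finally show ?thesis .
qed

theorem proposition1:
  fixes emb :: "K \<Rightarrow> 'l::field" and \<delta> :: 'l and n :: nat
  assumes emb_add: "\<And>a b. emb (a + b) = emb a + emb b"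
      and emb_mult: "\<And>a b. emb (a * b) = emb a * emb b"
      and emb_one: "emb 1 = 1"
      and emb_inj: "inj emb"
      and root: "emb uu * (\<delta> + 1)^2 - (emb vv - 1) * (\<delta> + 1) - 1 = 0"
      and gen_by_delta: "\<forall>x::'l. \<exists>a b. x = emb a + emb b * \<delta>"
      and n: "1 \<le> n"
  shows "induces_iso n
           (fa_ideal n (bt_rels n (emb uu * (\<delta> + 1)^2) (emb uu * (\<delta> + 1)^2)))
           (fa_ideal n (bt_rels n (emb uu) (emb vv)))
           (bt_assign \<delta>)"
proof -
  define u where "u = emb uu"
  define v where "v = emb vv"
  define q where "q = u * (\<delta> + 1)^2"
  have e0: "emb 0 = 0"
  proof -
    have "emb 0 + emb 0 = emb 0 + 0" using emb_add[of 0 0] by simp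
    then show ?thesis by (simp only: add_left_cancel)
  qed
  have uu0: "uu \<noteq> 0"
  proof
    assume "uu = 0"
    then have "Fract [:[:0, 1:]:] 1 = Fract 0 (1::complex poly poly)" by (simp add: uu_def fract_collapse)
    then show False by (simp add: eq_fract)
  qed
  have u0: "u \<noteq> 0" using emb_inj uu0 e0 unfolding u_def by (metis injD)
  have d0: "\<delta> + 1 \<noteq> 0"
  proof
    assume "\<delta> + 1 = 0" then show False using root by simp
  qed
  have qv0: "q - (v - 1) * (\<delta> + 1) - 1 = 0" using root by (simp add: q_def u_def v_def)
  have qv: "(v - 1) * (\<delta> + 1) = q - 1" using qv0 by (simp add: algebra_simps)
  have q0: "q \<noteq> 0" using u0 d0 by (simp add: q_def)
  define c where "c = \<delta> / (1 + \<delta>)"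
  have c1: "1 + - c = 1 / (\<delta> + 1)" using d0 by (simp add: c_def field_simps)
  have c1': "1 - c = 1 / (\<delta> + 1)" using c1 by simp
  define eE :: "nat \<Rightarrow> 'l FA" where "eE i = mn [E i]" for i
  define gG :: "nat \<Rightarrow> 'l FA" where "gG i = mn [G i]" for i
  define \<chi>\<phi> :: "gen \<Rightarrow> 'l FA" where
    "\<chi>\<phi> x = (case x of G i \<Rightarrow> mn [G i] + sc \<delta> * mn [E i, G i] | E i \<Rightarrow> mn [E i])" for x
  define \<chi>\<psi> :: "gen \<Rightarrow> 'l FA" where
    "\<chi>\<psi> x = (case x of G i \<Rightarrow> mn [G i] + sc (- c) * mn [E i, G i] | E i \<Rightarrow> mn [E i])" for x
  define S1 :: "'l FA set" where "S1 = rl n q q"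
  define S2 :: "'l FA set" where "S2 = rl n u v"
  have S1C: "S1 \<subseteq> Cs n" and S2C: "S2 \<subseteq> Cs n" by (simp_all add: S1_def S2_def rl_Cs)
  have phi: "bt_assign \<delta> = (\<lambda>x. lk (\<chi>\<phi> x))"
    by (rule ext, case_tac x) (simp_all add: bt_assign_def \<chi>\<phi>_def lk_plus lk_scm lk_mn)
  have I1: "fa_ideal n (bt_rels n (emb uu * (\<delta> + 1)^2) (emb uu * (\<delta> + 1)^2)) = fa_ideal n (lk ` S1)"
    by (simp add: S1_def lk_rl q_def u_def)
  have I2: "fa_ideal n (bt_rels n (emb uu) (emb vv)) = fa_ideal n (lk ` S2)"
    by (simp add: S2_def lk_rl u_def v_def)
  have fG: "\<And>a i. mn [G i] + sc a * mn [E i, G i] = (1 + sc a * eE i) * gG i"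
    by (simp add: eE_def gG_def mn_Cons2 algebra_simps)
  have R2: "rels (Id S2) sc eE gG n (u - 1) (v - 1)" unfolding S2_def eE_def gG_def by (rule rels_rl)
  have "rels (Id S2) sc eE (\<lambda>i. (1 + sc \<delta> * eE i) * gG i) n ((1 + \<delta>) * (1 + \<delta>) * (1 + (u - 1)) - 1) ((v - 1) * (1 + \<delta>))"
    by (rule rels_transfer[OF ideal_Id sc_add sc_mult sc_one sc_comm R2]) (simp add: u0)
  moreover have "(1 + \<delta>) * (1 + \<delta>) * (1 + (u - 1)) - 1 = q - 1" by (simp add: q_def power2_eq_square algebra_simps)
  moreover have "(v - 1) * (1 + \<delta>) = q - 1" using qv by (simp add: add.commute)
  ultimately have RT: "rels (Id S2) sc eE (\<lambda>i. (1 + sc \<delta> * eE i) * gG i) n (q - 1) (q - 1)" by simp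
  have hphi: "hom \<chi>\<phi> p \<in> Id S2" if "p \<in> Id S1" for p
  proof (rule Id_hom[OF ideal_Id _ that])
    fix r assume r: "r \<in> S1"
    show "hom \<chi>\<phi> r \<in> Id S2"
      by (rule rl_hom[OF ideal_Id RT _ _ r[unfolded S1_def]]) (simp_all add: \<chi>\<phi>_def eE_def fG)
  qed
  have R1: "rels (Id S1) sc eE gG n (q - 1) (q - 1)" unfolding S1_def eE_def gG_def by (rule rels_rl)
  have "rels (Id S1) sc eE (\<lambda>i. (1 + sc (- c) * eE i) * gG i) n ((1 + - c) * (1 + - c) * (1 + (q - 1)) - 1) ((q - 1) * (1 + - c))"
    by (rule rels_transfer[OF ideal_Id sc_add sc_mult sc_one sc_comm R1]) (simp add: q0)
  moreover have "(1 + - c) * (1 + - c) * (1 + (q - 1)) - 1 = u - 1" using d0 by (simp add: c1 c1' q_def power2_eq_square)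
  moreover have "(q - 1) * (1 + - c) = v - 1" using d0 by (simp add: c1 c1' qv[symmetric])
  ultimately have RS: "rels (Id S1) sc eE (\<lambda>i. (1 + sc (- c) * eE i) * gG i) n (u - 1) (v - 1)" by simp
  have hpsi: "hom \<chi>\<psi> p \<in> Id S1" if "p \<in> Id S2" for p
  proof (rule Id_hom[OF ideal_Id _ that])
    fix r assume r: "r \<in> S2"
    show "hom \<chi>\<psi> r \<in> Id S1"
      by (rule rl_hom[OF ideal_Id RS _ _ r[unfolded S2_def]]) (simp_all add: \<chi>\<psi>_def eE_def fG)
  qed
  have Cphi: "\<chi>\<phi> x \<in> Cs n" if "x \<in> letters n" for x
    using that by (auto simp: letters_def \<chi>\<phi>_def intro!: Cs_add Cs_sc Cs_mn)
  have Cpsi: "\<chi>\<psi> x \<in> Cs n" if "x \<in> letters n" for x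
    using that by (auto simp: letters_def \<chi>\<psi>_def intro!: Cs_add Cs_sc Cs_mn)
  have ee1: "eE i * eE i - eE i \<in> Id S1" if "1 \<le> i" "i < n" for i
    using that unfolding eE_def S1_def rl_def by (intro Igen) (simp only: mn_Cons2[symmetric], blast)
  have ee2: "eE i * eE i - eE i \<in> Id S2" if "1 \<le> i" "i < n" for i
    using that unfolding eE_def S2_def rl_def by (intro Igen) (simp only: mn_Cons2[symmetric], blast)
  have xy: "\<delta> + - c + \<delta> * - c = 0" using d0 by (simp add: c_def field_simps)
  have close1: "hom \<chi>\<psi> (hom \<chi>\<phi> p) - p \<in> Id S1" if "p \<in> Cs n" for p
    unfolding hom_comp
  proof (rule hom_close[OF ideal_Id _ that])
    fix x assume "x \<in> letters n"
    then obtain i where i: "1 \<le> i" "i < n" and x: "x = G i \<or> x = E i" by (auto simp: letters_def)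
    show "hom \<chi>\<psi> (\<chi>\<phi> x) - mn [x] \<in> Id S1"
    proof (cases "x = E i")
      case True then show ?thesis by (simp add: \<chi>\<phi>_def \<chi>\<psi>_def hom_mn I0)
    next
      case False
      then have xg: "x = G i" using x by blast
      have "hom \<chi>\<psi> (\<chi>\<phi> x) = (gG i + sc (- c) * (eE i * gG i)) + sc \<delta> * (eE i * (gG i + sc (- c) * (eE i * gG i)))"
        by (simp add: xg \<chi>\<phi>_def \<chi>\<psi>_def hom_add hom_sc hom_mn hom_mult hom_scc eE_def gG_def mn_Cons2)
      then show ?thesis using comp_letter[OF ideal_Id ee1[OF i] xy, of "gG i"] by (simp add: xg gG_def)
    qed
  qed
  have xy': "- c + \<delta> + - c * \<delta> = 0" using xy by (simp add: algebra_simps)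
  have close2: "hom \<chi>\<phi> (hom \<chi>\<psi> p) - p \<in> Id S2" if "p \<in> Cs n" for p
    unfolding hom_comp
  proof (rule hom_close[OF ideal_Id _ that])
    fix x assume "x \<in> letters n"
    then obtain i where i: "1 \<le> i" "i < n" and x: "x = G i \<or> x = E i" by (auto simp: letters_def)
    show "hom \<chi>\<phi> (\<chi>\<psi> x) - mn [x] \<in> Id S2"
    proof (cases "x = E i")
      case True then show ?thesis by (simp add: \<chi>\<phi>_def \<chi>\<psi>_def hom_mn I0)
    next
      case False
      then have xg: "x = G i" using x by blast
      have "hom \<chi>\<phi> (\<chi>\<psi> x) = (gG i + sc \<delta> * (eE i * gG i)) + sc (- c) * (eE i * (gG i + sc \<delta> * (eE i * gG i)))"
        by (simp add: xg \<chi>\<phi>_def \<chi>\<psi>_def hom_add hom_sc hom_mn hom_mult hom_scc eE_def gG_def mn_Cons2)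
      then show ?thesis using comp_letter[OF ideal_Id ee2[OF i] xy', of "gG i"] by (simp add: xg gG_def)
    qed
  qed
  show ?thesis
    unfolding induces_iso_def I1 I2 phi
  proof (intro conjI ballI allI impI)
    fix f :: "gen list \<Rightarrow> 'l" assume "f \<in> fa_carrier n"
    then obtain p where p: "p \<in> Cs n" "f = lk p" using carrier_iff by blast
    show "fa_subst (\<lambda>x. lk (\<chi>\<phi> x)) f \<in> fa_carrier n"
      using p by (simp add: fa_subst_lk lk_Cs_carrier Cs_hom Cphi)
  next
    show "fa_subst (\<lambda>x. lk (\<chi>\<phi> x)) (mono []) = mono []"
      by (simp add: lk_one[symmetric] fa_subst_lk hom_one)
  next
    fix f g :: "gen list \<Rightarrow> 'l" assume "f \<in> fa_carrier n" "g \<in> fa_carrier n"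
    then obtain p q where "f = lk p" "g = lk q" using carrier_iff by blast
    then show "fa_subst (\<lambda>x. lk (\<chi>\<phi> x)) (fa_add f g) = fa_add (fa_subst (\<lambda>x. lk (\<chi>\<phi> x)) f) (fa_subst (\<lambda>x. lk (\<chi>\<phi> x)) g)"
      by (simp add: lk_plus[symmetric] fa_subst_lk hom_add)
  next
    fix c :: 'l and f :: "gen list \<Rightarrow> 'l" assume "f \<in> fa_carrier n"
    then obtain p where "f = lk p" using carrier_iff by blast
    then show "fa_subst (\<lambda>x. lk (\<chi>\<phi> x)) (fa_smul c f) = fa_smul c (fa_subst (\<lambda>x. lk (\<chi>\<phi> x)) f)"
      by (simp add: lk_scm[symmetric] fa_subst_lk hom_sc)
  next
    fix f g :: "gen list \<Rightarrow> 'l" assume "f \<in> fa_carrier n" "g \<in> fa_carrier n"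
    then obtain p q where "f = lk p" "g = lk q" using carrier_iff by blast
    then show "fa_subst (\<lambda>x. lk (\<chi>\<phi> x)) (fa_mult f g) = fa_mult (fa_subst (\<lambda>x. lk (\<chi>\<phi> x)) f) (fa_subst (\<lambda>x. lk (\<chi>\<phi> x)) g)"
      by (simp add: lk_fun_mult[symmetric] fa_subst_lk hom_mult)
  next
    fix f :: "gen list \<Rightarrow> 'l" assume "f \<in> fa_carrier n" and fI: "f \<in> fa_ideal n (lk ` S1)"
    obtain p where p: "f = lk p" "p \<in> Id S1" "p \<in> Cs n" using bridge_a[OF fI S1C] by blast
    have "hom \<chi>\<phi> p \<in> Id S2" using hphi p by blast
    moreover have "hom \<chi>\<phi> p \<in> Cs n" using p Cphi by (simp add: Cs_hom)
    ultimately show "fa_subst (\<lambda>x. lk (\<chi>\<phi> x)) f \<in> fa_ideal n (lk ` S2)"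
      using p by (simp add: fa_subst_lk bridge_b'[OF _ S2C])
  next
    fix f :: "gen list \<Rightarrow> 'l" assume "f \<in> fa_carrier n" and fI: "fa_subst (\<lambda>x. lk (\<chi>\<phi> x)) f \<in> fa_ideal n (lk ` S2)"
    then obtain p where p: "p \<in> Cs n" "f = lk p" using carrier_iff by blast
    with fI have "lk (hom \<chi>\<phi> p) \<in> fa_ideal n (lk ` S2)" by (simp add: fa_subst_lk)
    then obtain p' where p': "lk (hom \<chi>\<phi> p) = lk p'" "p' \<in> Id S2" using bridge_a[OF _ S2C] by blast
    then have "hom \<chi>\<phi> p \<in> Id S2" using lk_inj by metis
    then have "hom \<chi>\<psi> (hom \<chi>\<phi> p) \<in> Id S1" by (rule hpsi)
    then have "hom \<chi>\<psi> (hom \<chi>\<phi> p) - (hom \<chi>\<psi> (hom \<chi>\<phi> p) - p) \<in> Id S1"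
      using close1[OF p(1)] by (rule ideal_diff[OF ideal_Id])
    then have "p \<in> Id S1" by simp
    then show "f \<in> fa_ideal n (lk ` S1)" using p by (simp add: bridge_b'[OF _ S1C])
  next
    fix g :: "gen list \<Rightarrow> 'l" assume "g \<in> fa_carrier n"
    then obtain p where p: "p \<in> Cs n" "g = lk p" using carrier_iff by blast
    have C: "hom \<chi>\<psi> p \<in> Cs n" using p Cpsi by (simp add: Cs_hom)
    have "fa_diff (fa_subst (\<lambda>x. lk (\<chi>\<phi> x)) (lk (hom \<chi>\<psi> p))) g = lk (hom \<chi>\<phi> (hom \<chi>\<psi> p) - p)"
      using p by (simp add: fa_subst_lk lk_minus)
    also have "\<dots> \<in> fa_ideal n (lk ` S2)"
      by (rule bridge_b'[OF close2[OF p(1)] S2C]) (intro Cs_minus Cs_hom C p(1) Cphi)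
    finally show "\<exists>f\<in>fa_carrier n. fa_diff (fa_subst (\<lambda>x. lk (\<chi>\<phi> x)) f) g \<in> fa_ideal n (lk ` S2)"
      using C lk_Cs_carrier by blast
  qed
qed


end
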